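(* Let $A\subseteq B$ be commutative semirings, $S=A[x_1,\dots,x_n]$, $\rho$ a congruence on $B$, and $\sigma$ a congruence on $S$. Then $(\sqrt{\sigma/\rho})^{c}\subseteq(\sqrt{\rho})_B(Z_\rho(\sigma)(B))$.
   Context: Semirings are commutative with $0$ and $1\neq0$, $0a=0$; congruences are equivalence relations compatible with $+$ and $\cdot$. Twisted product: $(a,b)\ast(c,d)=(ac+bd,ad+bc)$, with $(a,b)^{\ast1}=(a,b)$ and $(a,b)^{\ast n}=(a,b)^{\ast(n-1)}\ast(a,b)$. For a congruence $\theta$ on a semiring $R$, $\sqrt{\theta}=\{(a,b)\in R\times R:\ (a+c,b+c)^{\ast n}\in\theta\ \text{for some}\ c\in R,\ n\geq1\}$. For $Y\subseteq B^n$ and a congruence $\theta$ on $B$, $\theta_B(Y)=\{(f,g)\in S\times S: (f(P),g(P))\in\theta\ \forall P\in Y\}$; $Z_\rho(\sigma)(B)=\{P\in B^n:(f(P),g(P))\in\rho\ \forall(f,g)\in\sigma\}$. For $f=\sum a_{i_1\cdots i_n}x_1^{i_1}\cdots x_n^{i_n}$, $g=\sum b_{i_1\cdots i_n}x_1^{i_1}\cdots x_n^{i_n}$ in $S$ and a congruence $\theta$ on $B$, write $f\equiv g\pmod\theta$ if $(a_{i_1\cdots i_n},b_{i_1\cdots i_n})\in\theta$ for all multi-indices. Define $\sqrt{\sigma/\rho}=\{(f_1,f_2)\in S\times S:\ \exists (g_1,g_2)\in\sqrt{\sigma}$ with $f_i\equiv g_i \pmod{\sqrt\rho}$, $i=1,2\}$,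 and $(\sqrt{\sigma/\rho})^{c}$ is the congruence on $S$ generated by this relation. *)

theory Defs
  imports "HOL-Library.Poly_Mapping"
begin

(* Commutative semirings: comm_semiring_1 + zero_neq_one. Polynomials in n variables are
   finitely supported maps from exponent maps (monomials) to coefficients; variables x_i, i < n. *)

type_synonym 'b mpoly = "(nat \<Rightarrow>\<^sub>0 nat) \<Rightarrow>\<^sub>0 'b"

definition subsemiring :: "'b::{comm_semiring_1,zero_neq_one} set \<Rightarrow> bool" where
  "subsemiring A \<longleftrightarrow> 0 \<in> A \<and> 1 \<in> A \<and> (\<forall>a\<in>A. \<forall>b\<in>A. a + b \<in> A \<and> a * b \<in> A)"

text \<open>The polynomial semiring S = A[x_1,...,x_n] as a subset of the polynomials over B.\<close>
definition polys :: "nat \<Rightarrow> 'b::{comm_semiring_1,zero_neq_one} set \<Rightarrow> 'b mpoly set" where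
  "polys n A = {p::'b mpoly. (\<forall>m\<in>Poly_Mapping.keys p. \<forall>i\<in>Poly_Mapping.keys (m::nat \<Rightarrow>\<^sub>0 nat). i < n) \<and> (\<forall>m. Poly_Mapping.lookup p m \<in> A)}"

text \<open>Points of B^n: functions nat \<Rightarrow> 'b vanishing outside {0..<n}.\<close>
definition points :: "nat \<Rightarrow> (nat \<Rightarrow> 'b::zero) set" where
  "points n = {P. \<forall>i\<ge>n. P i = 0}"

definition peval :: "'b::{comm_semiring_1,zero_neq_one} mpoly \<Rightarrow> (nat \<Rightarrow> 'b) \<Rightarrow> 'b" where
  "peval p P = (\<Sum>m\<in>Poly_Mapping.keys p. Poly_Mapping.lookup p m * (\<Prod>i\<in>Poly_Mapping.keys m. P i ^ Poly_Mapping.lookup m i))"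

definition congruence :: "'a::{plus,times} set \<Rightarrow> ('a \<times> 'a) set \<Rightarrow> bool" where
  "congruence C \<theta> \<longleftrightarrow> \<theta> \<subseteq> C \<times> C \<and> refl_on C \<theta> \<and> sym \<theta> \<and> trans \<theta> \<and>
     (\<forall>a b c d. (a,b) \<in> \<theta> \<longrightarrow> (c,d) \<in> \<theta> \<longrightarrow> (a + c, b + d) \<in> \<theta> \<and> (a * c, b * d) \<in> \<theta>)"

definition cong_gen :: "'a::{plus,times} set \<Rightarrow> ('a \<times> 'a) set \<Rightarrow> ('a \<times> 'a) set" where
  "cong_gen C R = \<Inter>{\<theta>. congruence C \<theta> \<and> R \<subseteq> \<theta>}"

definition twisted :: "'a::comm_semiring_1 \<times> 'a \<Rightarrow> 'a \<times> 'a \<Rightarrow> 'a \<times> 'a" where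
  "twisted x y = (fst x * fst y + snd x * snd y, fst x * snd y + snd x * fst y)"

text \<open>twpow x n for n \<ge> 1: twpow x 1 = x, twpow x n = twisted (twpow x (n-1)) x.
  (The value at 0 is the neutral element (1,0) and is never used.)\<close>
fun twpow :: "'a::comm_semiring_1 \<times> 'a \<Rightarrow> nat \<Rightarrow> 'a \<times> 'a" where
  "twpow x 0 = (1, 0)"
| "twpow x (Suc 0) = x"
| "twpow x (Suc (Suc n)) = twisted (twpow x (Suc n)) x"

definition cong_rad :: "'a::comm_semiring_1 set \<Rightarrow> ('a \<times> 'a) set \<Rightarrow> ('a \<times> 'a) set" where
  "cong_rad C \<theta> = {(a,b). a \<in> C \<and> b \<in> C \<and> (\<exists>c\<in>C. \<exists>n\<ge>1. twpow (a + c, b + c) n \<in> \<theta>)}"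

definition coeff_cong :: "'b mpoly \<Rightarrow> 'b mpoly \<Rightarrow> ('b::zero \<times> 'b) set \<Rightarrow> bool" where
  "coeff_cong f g \<theta> \<longleftrightarrow> (\<forall>m. (Poly_Mapping.lookup f m, Poly_Mapping.lookup g m) \<in> \<theta>)"

definition rad_quot :: "nat \<Rightarrow> 'b::{comm_semiring_1,zero_neq_one} set \<Rightarrow> ('b mpoly \<times> 'b mpoly) set
    \<Rightarrow> ('b \<times> 'b) set \<Rightarrow> ('b mpoly \<times> 'b mpoly) set" where
  "rad_quot n A \<sigma> \<rho> = {(f1, f2). f1 \<in> polys n A \<and> f2 \<in> polys n A \<and>
     (\<exists>g1 g2. (g1, g2) \<in> cong_rad (polys n A) \<sigma> \<and>
        coeff_cong f1 g1 (cong_rad UNIV \<rho>) \<and> coeff_cong f2 g2 (cong_rad UNIV \<rho>))}"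

definition cong_of_points :: "nat \<Rightarrow> 'b::{comm_semiring_1,zero_neq_one} set \<Rightarrow> ('b \<times> 'b) set
    \<Rightarrow> (nat \<Rightarrow> 'b) set \<Rightarrow> ('b mpoly \<times> 'b mpoly) set" where
  "cong_of_points n A \<theta> Y = {(f, g). f \<in> polys n A \<and> g \<in> polys n A \<and>
     (\<forall>P\<in>Y. (peval f P, peval g P) \<in> \<theta>)}"

definition zero_locus :: "nat \<Rightarrow> ('b \<times> 'b) set \<Rightarrow> ('b::{comm_semiring_1,zero_neq_one} mpoly \<times> 'b mpoly) set
    \<Rightarrow> (nat \<Rightarrow> 'b) set" where
  "zero_locus n \<rho> \<sigma> = {P \<in> points n. \<forall>(f, g)\<in>\<sigma>. (peval f P, peval g P) \<in> \<rho>}"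

end

theory Submission
  imports Defs
begin

datatype 'a tw = TW (tfst: 'a) (tsnd: 'a)

instantiation tw :: (comm_semiring_1) comm_semiring_1
begin
definition "0 = TW 0 0"
definition "1 = TW 1 0"
definition "x + y = TW (tfst x + tfst y) (tsnd x + tsnd y)"
definition "x * y = TW (tfst x * tfst y + tsnd x * tsnd y) (tfst x * tsnd y + tsnd x * tfst y)"
instance
proof
  fix a b c :: "'a tw"
  show "a + b + c = a + (b + c)" by (simp add: plus_tw_def algebra_simps)
  show "a + b = b + a" by (simp add: plus_tw_def algebra_simps)
  show "0 + a = a" by (simp add: plus_tw_def zero_tw_def)
  show "a * b * c = a * (b * c)" by (simp add: times_tw_def algebra_simps)
  show "a * b = b * a" by (simp add: times_tw_def algebra_simps)
  show "1 * a = a" by (simp add: times_tw_def one_tw_def)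
  show "(a + b) * c = a * c + b * c" by (simp add: times_tw_def plus_tw_def algebra_simps)
  show "0 * a = 0" by (simp add: times_tw_def zero_tw_def)
  show "a * 0 = 0" by (simp add: times_tw_def zero_tw_def)
  show "(0::'a tw) \<noteq> 1" by (simp add: zero_tw_def one_tw_def)
qed
end

lemma tw_plus[simp]: "TW a b + TW c d = TW (a+c) (b+d)" by (simp add: plus_tw_def)
lemma tw_times[simp]: "TW a b * TW c d = TW (a*c+b*d) (a*d+b*c)" by (simp add: times_tw_def)

lemma twpow_eq: "n \<ge> 1 \<Longrightarrow> twpow (a,b) n = (tfst (TW a b ^ n), tsnd (TW a b ^ n))"
proof (induction "(a,b)" n rule: twpow.induct)
  case 2 then show ?case by simp
next
  case (3 n)
  then show ?case
    by (cases "TW a b ^ Suc n") (simp add: twisted_def power_Suc2 del: power_Suc)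
qed simp

context
  fixes \<rho> :: "('b::comm_semiring_1 \<times> 'b) set"
  assumes cg: "congruence UNIV \<rho>"
begin

definition good :: "'b tw \<Rightarrow> bool" where "good x \<longleftrightarrow> (tfst x, tsnd x) \<in> \<rho>"
definition rad :: "'b tw \<Rightarrow> bool" where "rad x \<longleftrightarrow> (\<exists>c n. n \<ge> 1 \<and> good ((x + TW c c) ^ n))"

lemma rho_refl: "(a,a) \<in> \<rho>" using cg unfolding congruence_def refl_on_def by auto
lemma rho_add: "(a,b) \<in> \<rho> \<Longrightarrow> (c,d) \<in> \<rho> \<Longrightarrow> (a+c,b+d) \<in> \<rho>" using cg unfolding congruence_def by auto
lemma rho_mult: "(a,b) \<in> \<rho> \<Longrightarrow> (c,d) \<in> \<rho> \<Longrightarrow> (a*c,b*d) \<in> \<rho>" using cg unfolding congruence_def by auto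
lemma rho_sym: "(a,b) \<in> \<rho> \<Longrightarrow> (b,a) \<in> \<rho>" using cg unfolding congruence_def by (auto dest: symD)
lemma rho_trans: "(a,b) \<in> \<rho> \<Longrightarrow> (b,c) \<in> \<rho> \<Longrightarrow> (a,c) \<in> \<rho>" using cg unfolding congruence_def by (auto dest: transD)

lemma good_0: "good 0" by (simp add: good_def zero_tw_def rho_refl)
lemma good_diag: "good (TW c c)" by (simp add: good_def rho_refl)
lemma good_add: "good x \<Longrightarrow> good y \<Longrightarrow> good (x + y)"
  by (cases x; cases y) (simp add: good_def rho_add)
lemma good_mult: "good x \<Longrightarrow> good (x * z)"
proof (cases x; cases z)
  fix a b c d assume g: "good x" and x: "x = TW a b" and z: "z = TW c d"
  have ab: "(a,b) \<in> \<rho>" using g x by (simp add: good_def)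
  have "(a*c + b*d, b*c + a*d) \<in> \<rho>"
    by (rule rho_add; rule rho_mult; simp add: ab rho_refl rho_sym)
  then show "good (x*z)" by (simp add: good_def x z add.commute)
qed
lemma good_mult2: "good z \<Longrightarrow> good (x * z)" using good_mult[of z x] by (simp add: mult.commute)
lemma good_sum: "finite I \<Longrightarrow> (\<And>i. i \<in> I \<Longrightarrow> good (f i)) \<Longrightarrow> good (sum f I)"
  by (induction I rule: finite_induct) (auto simp: good_0 good_add)

lemma good_pow_ge: "good (x ^ n) \<Longrightarrow> n \<le> k \<Longrightarrow> good (x ^ k)"
proof -
  assume "good (x^n)" "n \<le> k"
  then have "x ^ k = x ^ n * x ^ (k - n)" by (simp add: power_add[symmetric])
  then show ?thesis using good_mult \<open>good (x^n)\<close> by simp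
qed

lemma good_binom: "good (X ^ n) \<Longrightarrow> good (Y ^ m) \<Longrightarrow> good ((X + Y) ^ (n + m))"
proof -
  assume gx: "good (X ^ n)" and gy: "good (Y ^ m)"
  have "(X + Y) ^ (n + m) = (\<Sum>k\<le>n+m. of_nat ((n+m) choose k) * X ^ k * Y ^ (n + m - k))"
    by (rule binomial_ring)
  moreover have "good (\<Sum>k\<le>n+m. of_nat ((n+m) choose k) * X ^ k * Y ^ (n + m - k))"
  proof (rule good_sum)
    fix k assume "k \<in> {..n+m}"
    show "good (of_nat ((n+m) choose k) * X ^ k * Y ^ (n + m - k))"
    proof (cases "n \<le> k")
      case True
      then have "good (X ^ k)" using good_pow_ge gx by blast
      then show ?thesis using good_mult good_mult2 by (metis mult.assoc)
    next
      case False
      then have "good (Y ^ (n+m-k))" using good_pow_ge gy by simp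
      then show ?thesis using good_mult2 by blast
    qed
  qed simp
  ultimately show ?thesis by simp
qed

lemma rad_add: "rad x \<Longrightarrow> rad y \<Longrightarrow> rad (x + y)"
proof -
  assume "rad x" "rad y"
  then obtain c n d m where "n \<ge> 1" "good ((x + TW c c)^n)" "m \<ge> 1" "good ((y + TW d d)^m)"
    unfolding rad_def by blast
  then have "good ((x + TW c c + (y + TW d d))^(n+m))" by (intro good_binom)
  moreover have "x + TW c c + (y + TW d d) = x + y + TW (c+d) (c+d)"
    by (simp add: ac_simps)
  ultimately show ?thesis unfolding rad_def using \<open>n \<ge> 1\<close> by (metis le_add1 order_trans)
qed

lemma rad_mult: "rad x \<Longrightarrow> rad (z * x)"
proof -
  assume "rad x"
  then obtain c n where n: "n \<ge> 1" "good ((x + TW c c)^n)" unfolding rad_def by blast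
  then have "good (z^n * (x + TW c c)^n)" using good_mult2 by blast
  moreover have "z^n * (x + TW c c)^n = (z * x + TW ((tfst z + tsnd z) * c) ((tfst z + tsnd z) * c))^n"
    by (cases z) (simp add: power_mult_distrib[symmetric] distrib_left algebra_simps)
  ultimately show ?thesis unfolding rad_def using n by metis
qed

lemma rad_shift: "rad (x + TW d d) \<Longrightarrow> rad x"
  unfolding rad_def by (metis add.assoc tw_plus)

lemma rad_refl: "rad (TW a a)"
  unfolding rad_def by (rule exI[of _ 0], rule exI[of _ 1]) (simp add: good_diag)

lemma rad_sym: "rad (TW a b) \<Longrightarrow> rad (TW b a)"
  using rad_mult[of "TW a b" "TW 0 1"] by simp

lemma rad_trans: "rad (TW a b) \<Longrightarrow> rad (TW b d) \<Longrightarrow> rad (TW a d)"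
  using rad_add[of "TW a b" "TW b d"] rad_shift[of "TW a d" b] by (simp add: ac_simps)

lemma rad_mult2: "rad (TW a b) \<Longrightarrow> rad (TW c d) \<Longrightarrow> rad (TW (a*c) (b*d))"
proof -
  assume "rad (TW a b)" "rad (TW c d)"
  then have "rad (TW a 0 * TW c d + TW d 0 * TW a b)" by (intro rad_add rad_mult)
  then have "rad (TW (a*c) (b*d) + TW (a*d) (a*d))" by (simp add: ac_simps)
  then show ?thesis by (rule rad_shift)
qed

lemma cong_rad_iff: "(a,b) \<in> cong_rad UNIV \<rho> \<longleftrightarrow> rad (TW a b)"
proof -
  have "(a,b) \<in> cong_rad UNIV \<rho> \<longleftrightarrow> (\<exists>c n. n \<ge> 1 \<and> good ((TW a b + TW c c)^n))"
  proof
    assume "(a,b) \<in> cong_rad UNIV \<rho>"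
    then obtain c n where "n \<ge> 1" "twpow (a + c, b + c) n \<in> \<rho>" unfolding cong_rad_def by blast
    then show "\<exists>c n. n \<ge> 1 \<and> good ((TW a b + TW c c)^n)"
      unfolding good_def by (intro exI[of _ c] exI[of _ n]) (simp add: twpow_eq)
  next
    assume "\<exists>c n. n \<ge> 1 \<and> good ((TW a b + TW c c)^n)"
    then obtain c n where "n \<ge> 1" "good ((TW a b + TW c c)^n)" by blast
    then show "(a,b) \<in> cong_rad UNIV \<rho>"
      unfolding cong_rad_def good_def by (auto intro!: exI[of _ c] exI[of _ n] simp: twpow_eq)
  qed
  then show ?thesis unfolding rad_def by simp
qed

lemma cong_rad_cong: "congruence UNIV (cong_rad UNIV \<rho>)"
  unfolding congruence_def
  using rad_add[of "TW _ _" "TW _ _"]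
  by (auto simp: cong_rad_iff refl_on_def sym_def trans_def intro: rad_refl rad_sym rad_trans rad_mult2)

end


definition mon :: "(nat \<Rightarrow>\<^sub>0 nat) \<Rightarrow> (nat \<Rightarrow> 'b::comm_semiring_1) \<Rightarrow> 'b" where
  "mon m P = (\<Prod>i\<in>Poly_Mapping.keys m. P i ^ Poly_Mapping.lookup m i)"

lemma peval_mon: "peval p P = (\<Sum>m\<in>Poly_Mapping.keys p. Poly_Mapping.lookup p m * mon m P)"
  by (simp add: peval_def mon_def)

lemma mon_ext: "finite U \<Longrightarrow> Poly_Mapping.keys m \<subseteq> U \<Longrightarrow> mon m P = (\<Prod>i\<in>U. P i ^ Poly_Mapping.lookup m i)"
  unfolding mon_def by (rule prod.mono_neutral_cong_left) (auto simp: in_keys_iff)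

lemma mon_add: "mon (m1 + m2) P = mon m1 P * mon m2 P"
proof -
  let ?U = "Poly_Mapping.keys m1 \<union> Poly_Mapping.keys m2"
  have f: "finite ?U" by simp
  have "mon (m1 + m2) P = (\<Prod>i\<in>?U. P i ^ Poly_Mapping.lookup (m1+m2) i)"
    using keys_add[of m1 m2] by (intro mon_ext f) auto
  also have "\<dots> = (\<Prod>i\<in>?U. P i ^ Poly_Mapping.lookup m1 i * P i ^ Poly_Mapping.lookup m2 i)"
    by (simp add: lookup_add power_add)
  also have "\<dots> = mon m1 P * mon m2 P"
    by (simp add: prod.distrib mon_ext[OF f])
  finally show ?thesis .
qed

lemma peval_add: "peval (p + q) P = peval p P + peval q P"
  unfolding peval_mon by (rule setsum_keys_plus_distrib) (auto simp: distrib_right)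

lemma peval_zero[simp]: "peval 0 P = 0" by (simp add: peval_def)

lemma peval_single: "peval (Poly_Mapping.single m c) P = c * mon m P"
  by (simp add: peval_mon)

lemma peval_sum: "peval (sum f I) P = (\<Sum>i\<in>I. peval (f i) P)"
  by (induction I rule: infinite_finite_induct) (auto simp: peval_add)

lemma poly_expand: "p = (\<Sum>m\<in>Poly_Mapping.keys p. Poly_Mapping.single m (Poly_Mapping.lookup p m))"
proof (rule poly_mapping_eqI)
  fix k
  show "Poly_Mapping.lookup p k = Poly_Mapping.lookup (\<Sum>m\<in>Poly_Mapping.keys p. Poly_Mapping.single m (Poly_Mapping.lookup p m)) k"
    by (cases "k \<in> Poly_Mapping.keys p")
       (auto simp: lookup_sum lookup_single when_def in_keys_iff sum.delta)
qed

lemma peval_mult: "peval (p * q) P = peval p P * peval (q :: 'b::comm_semiring_1 mpoly) P"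
proof -
  let ?Kp = "Poly_Mapping.keys p" and ?Kq = "Poly_Mapping.keys q"
  let ?a = "Poly_Mapping.lookup p" and ?b = "Poly_Mapping.lookup q"
  have "p * q = (\<Sum>m\<in>?Kp. Poly_Mapping.single m (?a m)) * (\<Sum>m'\<in>?Kq. Poly_Mapping.single m' (?b m'))"
    by (subst poly_expand[of p], subst poly_expand[of q]) simp
  also have "\<dots> = (\<Sum>m\<in>?Kp. \<Sum>m'\<in>?Kq. Poly_Mapping.single (m + m') (?a m * ?b m'))"
    by (simp add: sum_product mult_single)
  finally have "peval (p * q) P = (\<Sum>m\<in>?Kp. \<Sum>m'\<in>?Kq. ?a m * ?b m' * mon (m + m') P)"
    by (simp add: peval_sum peval_single)
  also have "\<dots> = (\<Sum>m\<in>?Kp. \<Sum>m'\<in>?Kq. (?a m * mon m P) * (?b m' * mon m' P))"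
    by (simp add: mon_add ac_simps)
  also have "\<dots> = peval p P * peval q P"
    by (simp add: peval_mon sum_product)
  finally show ?thesis .
qed

lemma peval_one: "peval (1 :: 'b::comm_semiring_1 mpoly) P = 1"
  using peval_single[of 0 "1::'b" P] by (simp add: mon_def)


lemma peval_twpow:
  "twpow (peval (fst x) P, peval (snd x) P) n = (peval (fst (twpow x n)) P, peval (snd (twpow x n)) P)"
  by (induction x n rule: twpow.induct) (auto simp: twisted_def peval_add peval_mult peval_one)

lemma peval_ext: "finite U \<Longrightarrow> Poly_Mapping.keys p \<subseteq> U \<Longrightarrow>
  peval p P = (\<Sum>m\<in>U. Poly_Mapping.lookup p m * mon m P)"
  unfolding peval_mon by (rule sum.mono_neutral_cong_left) (auto simp: in_keys_iff)

lemma cong_sum: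
  assumes c: "congruence UNIV \<theta>" and fin: "finite I" and h: "\<And>i. i \<in> I \<Longrightarrow> (f i, g i) \<in> \<theta>"
  shows "(sum f I, sum g I) \<in> \<theta>"
  using fin h
proof (induction I rule: finite_induct)
  case empty then show ?case using c by (auto simp: congruence_def refl_on_def)
next
  case (insert x F) then show ?case using c by (auto simp: congruence_def)
qed

lemma peval_coeff_cong:
  assumes c: "congruence UNIV \<theta>" and h: "coeff_cong f g \<theta>"
  shows "(peval f P, peval g P) \<in> \<theta>"
proof -
  let ?U = "Poly_Mapping.keys f \<union> Poly_Mapping.keys g"
  have "(\<Sum>m\<in>?U. Poly_Mapping.lookup f m * mon m P, \<Sum>m\<in>?U. Poly_Mapping.lookup g m * mon m P) \<in> \<theta>"
  proof (rule cong_sum[OF c], simp)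
    fix m
    have "(mon m P, mon m P) \<in> \<theta>" using c by (auto simp: congruence_def refl_on_def)
    then show "(Poly_Mapping.lookup f m * mon m P, Poly_Mapping.lookup g m * mon m P) \<in> \<theta>"
      using h c unfolding coeff_cong_def congruence_def by blast
  qed
  moreover have "peval f P = (\<Sum>m\<in>?U. Poly_Mapping.lookup f m * mon m P)"
    "peval g P = (\<Sum>m\<in>?U. Poly_Mapping.lookup g m * mon m P)"
    by (rule peval_ext; auto)+
  ultimately show ?thesis by simp
qed

theorem proposition3p9:
  fixes A :: "'b::{comm_semiring_1,zero_neq_one} set"
    and n :: nat
    and \<rho> :: "('b \<times> 'b) set"
    and \<sigma> :: "('b mpoly \<times> 'b mpoly) set"
  assumes "subsemiring A"
    and "congruence (UNIV :: 'b set) \<rho>"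
    and "congruence (polys n A) \<sigma>"
  shows "cong_gen (polys n A) (rad_quot n A \<sigma> \<rho>)
           \<subseteq> cong_of_points n A (cong_rad UNIV \<rho>) (zero_locus n \<rho> \<sigma>)"
proof -
  let ?K = "cong_rad UNIV \<rho>"
  let ?T = "cong_of_points n A ?K (zero_locus n \<rho> \<sigma>)"
  have K: "congruence UNIV ?K" by (rule cong_rad_cong[OF assms(2)])
  have Kr: "(a,a) \<in> ?K" for a using K by (auto simp: congruence_def refl_on_def)
  have Ks: "(a,b) \<in> ?K \<Longrightarrow> (b,a) \<in> ?K" for a b using K by (auto simp: congruence_def dest: symD)
  have Kt: "(a,b) \<in> ?K \<Longrightarrow> (b,c) \<in> ?K \<Longrightarrow> (a,c) \<in> ?K" for a b c
    using K by (auto simp: congruence_def dest: transD)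
  have Kc: "(a,b) \<in> ?K \<Longrightarrow> (c,d) \<in> ?K \<Longrightarrow> (a+c,b+d) \<in> ?K \<and> (a*c,b*d) \<in> ?K" for a b c d
    using K by (auto simp: congruence_def)
  have S: "\<sigma> \<subseteq> polys n A \<times> polys n A" "refl_on (polys n A) \<sigma>"
    "\<And>a b c d. (a,b) \<in> \<sigma> \<Longrightarrow> (c,d) \<in> \<sigma> \<Longrightarrow> (a + c, b + d) \<in> \<sigma> \<and> (a * c, b * d) \<in> \<sigma>"
    using assms(3) by (auto simp: congruence_def)
  have clos: "a \<in> polys n A \<Longrightarrow> c \<in> polys n A \<Longrightarrow> a + c \<in> polys n A \<and> a * c \<in> polys n A" for a c
  proof -
    assume "a \<in> polys n A" "c \<in> polys n A"
    then have "(a,a) \<in> \<sigma>" "(c,c) \<in> \<sigma>" using S(2) by (auto simp: refl_on_def)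
    then have "(a+c,a+c) \<in> \<sigma>" "(a*c,a*c) \<in> \<sigma>" using S(3) by blast+
    then show ?thesis using S(1) by blast
  qed
  have Tc: "congruence (polys n A) ?T"
    unfolding congruence_def
  proof (intro conjI allI impI)
    show "?T \<subseteq> polys n A \<times> polys n A" by (auto simp: cong_of_points_def)
    show "refl_on (polys n A) ?T" by (auto simp: refl_on_def cong_of_points_def Kr)
    show "sym ?T" by (auto simp: sym_def cong_of_points_def Ks)
    show "trans ?T" unfolding trans_def cong_of_points_def by (blast intro: Kt)
  next
    fix a b c d assume "(a,b) \<in> ?T" "(c,d) \<in> ?T"
    then show "(a + c, b + d) \<in> ?T"
      unfolding cong_of_points_def using clos Kc by (auto simp: peval_add peval_mult)
  next
    fix a b c d assume "(a,b) \<in> ?T" "(c,d) \<in> ?T"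
    then show "(a * c, b * d) \<in> ?T"
      unfolding cong_of_points_def using clos Kc by (auto simp: peval_add peval_mult)
  qed
  have sub: "rad_quot n A \<sigma> \<rho> \<subseteq> ?T"
  proof
    fix x assume "x \<in> rad_quot n A \<sigma> \<rho>"
    then obtain f1 f2 g1 g2 where x: "x = (f1,f2)" and f: "f1 \<in> polys n A" "f2 \<in> polys n A"
      and g: "(g1, g2) \<in> cong_rad (polys n A) \<sigma>"
      and c1: "coeff_cong f1 g1 ?K" and c2: "coeff_cong f2 g2 ?K"
      unfolding rad_quot_def by blast
    from g obtain h k where h: "h \<in> polys n A" "k \<ge> 1" "twpow (g1 + h, g2 + h) k \<in> \<sigma>"
      unfolding cong_rad_def by blast
    have "(peval f1 P, peval f2 P) \<in> ?K" if P: "P \<in> zero_locus n \<rho> \<sigma>" for P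
    proof -
      have "(peval (fst (twpow (g1 + h, g2 + h) k)) P, peval (snd (twpow (g1 + h, g2 + h) k)) P) \<in> \<rho>"
        using P h(3) unfolding zero_locus_def by (cases "twpow (g1 + h, g2 + h) k") auto
      then have "twpow (peval g1 P + peval h P, peval g2 P + peval h P) k \<in> \<rho>"
        using peval_twpow[of "(g1 + h, g2 + h)" P k] by (simp add: peval_add)
      then have g12: "(peval g1 P, peval g2 P) \<in> ?K"
        unfolding cong_rad_def using h(2) by blast
      have "(peval f1 P, peval g1 P) \<in> ?K" "(peval f2 P, peval g2 P) \<in> ?K"
        using peval_coeff_cong[OF K c1] peval_coeff_cong[OF K c2] by auto
      then show ?thesis using g12 Kt Ks by blast
    qed
    then show "x \<in> ?T" using x f unfolding cong_of_points_def by blast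
  qed
  show ?thesis unfolding cong_gen_def using Tc sub by blast
qed

end
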